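(* Let $G=(\mathbb Z/2)^3$ and write $H^*(G,\mathbb F_2)=\mathbb F_2[x,y,z]$ with $x,y,z$ of degree one dual to the standard basis $e_1,e_2,e_3$ of $G$. Let $\alpha\in H^4(G,\mathbb Z)$ be the integral class whose mod $2$ reduction is $Sq^1(xyz)=x^2yz+xy^2z+xyz^2$. For $g=ae_1+be_2+ce_3\in G$ with $a,b,c\in\{0,1\}$ (written multiplicatively as $g=x^ay^bz^c$), the inverse transgression $\theta_g^*:H^4(G,\mathbb Z)\to H^3(G,\mathbb Z)$ satisfies, after mod $2$ reduction, $$\theta_g^*(\alpha)=a(y^2z+yz^2)+b(x^2z+xz^2)+c(x^2y+xy^2).$$ In particular $\theta_g^*(\alpha)\neq 0$ for every $g\neq 1$.
   Context: For an elementary abelian $2$-group $G$ and $k>0$, mod $2$ reduction $H^k(G,\mathbb Z)\to H^k(G,\mathbb F_2)$ is injective, and integral classes are identified with their reductions. For a finite group $G$ and $g\in G$ with centralizer $Z_G(g)$ (here $Z_G(g)=G$), the inverse transgression $\theta_g$ is the cochain map from inhomogeneous cochains $C^{k+1}(G,\mathbb Z)$ to $C^k(Z_G(g),\mathbb Z)$ given by $\theta_g(\phi)(u_1,\dots,u_k)=(-1)^k\phi(g,u_1,\dots,u_k)+\sum_{i=1}^k(-1)^{i+k}\phi(u_1,\dots,u_i,g_i,u_{i+1},\dots,u_k)$, where $g_i=(u_1\cdots u_i)^{-1}g\,u_1\cdots u_i$; $\theta_g^*$ is the induced map in cohomology. Equivalently, if $\rho_g:Z_G(g)\times\mathbb Z\to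 G$, $(u,t^i)\mapsto ug^i$, and $\nu$ generates $H^1(\mathbb Z,\mathbb Z)$, then $\rho_g^*(w)=\mathrm{res}^G_{Z_G(g)}(w)\otimes1+\theta_g^*(w)\otimes\nu$. *)

theory Defs
  imports "HOL-Number_Theory.Cong"
begin

text \<open>The group G = (Z/2)^3, an element (a,b,c) standing for a e1 + b e2 + c e3
  (equivalently x^a y^b z^c).  The group law is componentwise addition mod 2.\<close>

type_synonym grp = "bool \<times> bool \<times> bool"

definition gmul :: "grp \<Rightarrow> grp \<Rightarrow> grp" where
  "gmul g h = (case g of (a,b,c) \<Rightarrow> case h of (a',b',c') \<Rightarrow> (a \<noteq> a', b \<noteq> b', c \<noteq> c'))"

definition gone :: grp where "gone = (False, False, False)"

definition ginv :: "grp \<Rightarrow> grp" where "ginv g = g"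

definition gprod :: "grp list \<Rightarrow> grp" where "gprod xs = foldl gmul gone xs"

text \<open>Inhomogeneous integral cochains: functions on lists of group elements;
  a k-cochain is only evaluated on lists of length k.\<close>

type_synonym cochain = "grp list \<Rightarrow> int"

definition merge_at :: "nat \<Rightarrow> grp list \<Rightarrow> grp list" where
  "merge_at i gs = take (i - 1) gs @ [gmul (gs ! (i - 1)) (gs ! i)] @ drop (i + 1) gs"

definition cobdry :: "nat \<Rightarrow> cochain \<Rightarrow> cochain" where
  "cobdry k \<phi> gs = \<phi> (tl gs) + (\<Sum>i\<in>{1..k}. (-1)^i * \<phi> (merge_at i gs))
                    + (-1)^(k+1) * \<phi> (take k gs)"

definition cocycle :: "nat \<Rightarrow> cochain \<Rightarrow> bool" where
  "cocycle k \<phi> \<longleftrightarrow> (\<forall>gs. length gs = Suc k \<longrightarrow> cobdry k \<phi> gs = 0)"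

definition is_coboundary :: "nat \<Rightarrow> cochain \<Rightarrow> bool" where
  "is_coboundary m \<phi> \<longleftrightarrow> (\<exists>\<psi>. \<forall>gs. length gs = Suc m \<longrightarrow> \<phi> gs = cobdry m \<psi> gs)"

text \<open>Two (Suc m)-cochains have cohomologous mod 2 reductions
  (same class in H^(m+1)(G,F2)); F2-cochains are represented by integer lifts.\<close>
definition cohom_mod2 :: "nat \<Rightarrow> cochain \<Rightarrow> cochain \<Rightarrow> bool" where
  "cohom_mod2 m \<phi> \<psi> \<longleftrightarrow>
     (\<exists>\<chi>. \<forall>gs. length gs = Suc m \<longrightarrow> [\<phi> gs - \<psi> gs = cobdry m \<chi> gs] (mod 2))"

definition theta :: "grp \<Rightarrow> nat \<Rightarrow> cochain \<Rightarrow> cochain" where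
  "theta g k \<phi> us = (-1)^k * \<phi> (g # us)
     + (\<Sum>i\<in>{1..k}. (-1)^(i+k) *
          \<phi> (take i us @ [gmul (gmul (ginv (gprod (take i us))) g) (gprod (take i us))] @ drop i us))"

definition xc :: "grp \<Rightarrow> int" where "xc g = of_bool (fst g)"
definition yc :: "grp \<Rightarrow> int" where "yc g = of_bool (fst (snd g))"
definition zc :: "grp \<Rightarrow> int" where "zc g = of_bool (snd (snd g))"

text \<open>Cocycle representing Sq^1(xyz) = x^2yz + xy^2z + xyz^2 (cup products of
  inhomogeneous cochains: (f \<union> h)(g1..g_{p+q}) = f(g1..gp) h(g_{p+1}..g_{p+q})).\<close>
definition sq1xyz :: cochain where
  "sq1xyz gs = xc (gs!0) * xc (gs!1) * yc (gs!2) * zc (gs!3)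
             + xc (gs!0) * yc (gs!1) * yc (gs!2) * zc (gs!3)
             + xc (gs!0) * yc (gs!1) * zc (gs!2) * zc (gs!3)"

definition target :: "bool \<Rightarrow> bool \<Rightarrow> bool \<Rightarrow> cochain" where
  "target a b c gs =
       of_bool a * (yc (gs!0) * yc (gs!1) * zc (gs!2) + yc (gs!0) * zc (gs!1) * zc (gs!2))
     + of_bool b * (xc (gs!0) * xc (gs!1) * zc (gs!2) + xc (gs!0) * zc (gs!1) * zc (gs!2))
     + of_bool c * (xc (gs!0) * xc (gs!1) * yc (gs!2) + xc (gs!0) * yc (gs!1) * yc (gs!2))"

end

theory Submission
  imports Defs
begin

lemma gmul_comm: "gmul g h = gmul h g"
  by (cases g; cases h) (auto simp: gmul_def)
lemma gmul_assoc: "gmul (gmul g h) k = gmul g (gmul h k)"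
  by (cases g; cases h; cases k) (auto simp: gmul_def)
lemma gmul_lcomm: "gmul g (gmul h k) = gmul h (gmul g k)"
  by (metis gmul_assoc gmul_comm)
lemma gmul_conj: "gmul (gmul (ginv p) g) p = g"
  by (cases g; cases p) (auto simp: gmul_def ginv_def)
lemma gmul_self: "gmul g g = gone"
  by (cases g) (auto simp: gmul_def gone_def)
lemma gmul_gone1: "gmul gone g = g"
  by (cases g) (auto simp: gmul_def gone_def)
lemma gmul_gone2: "gmul g gone = g"
  by (cases g) (auto simp: gmul_def gone_def)

lemma sum13: "(\<Sum>i\<in>{1..3::nat}. f i) = f 1 + f 2 + (f 3 :: int)"
  by (simp add: numeral_eq_Suc)
lemma sum12: "(\<Sum>i\<in>{1..2::nat}. f i) = f 1 + (f 2 :: int)"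
  by (simp add: numeral_eq_Suc)
lemma sum14: "(\<Sum>i\<in>{1..4::nat}. f i) = f 1 + f 2 + f 3 + (f 4 :: int)"
  by (simp add: numeral_eq_Suc)

lemma theta_alt: "theta g k \<phi> us = (-1)^k * \<phi> (g # us)
     + (\<Sum>i\<in>{1..k}. (-1)^(i+k) * \<phi> (take i us @ [g] @ drop i us))"
  unfolding theta_def gmul_conj ..

lemma theta3: "theta g 3 \<phi> [u1,u2,u3] =
   - \<phi> [g,u1,u2,u3] + \<phi> [u1,g,u2,u3] - \<phi> [u1,u2,g,u3] + \<phi> [u1,u2,u3,g]"
  unfolding theta_alt sum13 by (simp add: numeral_eq_Suc)

lemma chain:
  "theta g 3 (cobdry 3 \<chi>) [u1,u2,u3] = cobdry 2 (theta g 2 \<chi>) [u1,u2,u3]"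
  unfolding theta_alt cobdry_def
  by (simp add: sum13 sum12 sum14 merge_at_def gmul_assoc gmul_comm gmul_lcomm numeral_eq_Suc)

lemma xc_mul: "xc (gmul g h) = xc g + xc h - 2 * xc g * xc h"
  by (cases g; cases h) (auto simp: gmul_def xc_def)
lemma yc_mul: "yc (gmul g h) = yc g + yc h - 2 * yc g * yc h"
  by (cases g; cases h) (auto simp: gmul_def yc_def)
lemma zc_mul: "zc (gmul g h) = zc g + zc h - 2 * zc g * zc h"
  by (cases g; cases h) (auto simp: gmul_def zc_def)
lemma xyz_triple: "xc (a,b,c) = of_bool a" "yc (a,b,c) = of_bool b" "zc (a,b,c) = of_bool c"
  by (simp_all add: xc_def yc_def zc_def)

lemma len3: "length us = 3 \<Longrightarrow> \<exists>u1 u2 u3. us = [u1,u2,u3]"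
  by (auto simp: length_Suc_conv numeral_eq_Suc)
lemma len4: "length us = 4 \<Longrightarrow> \<exists>u1 u2 u3 u4. us = [u1,u2,u3,u4]"
  by (auto simp: length_Suc_conv numeral_eq_Suc)
lemma len5: "length us = 5 \<Longrightarrow> \<exists>u1 u2 u3 u4 u5. us = [u1,u2,u3,u4,u5]"
  by (auto simp: length_Suc_conv numeral_eq_Suc)

definition phi0 :: cochain where
  "phi0 gs = xc (gs!0) * xc (gs!1) * yc (gs!2) * zc (gs!3)
           - xc (gs!0) * yc (gs!1) * yc (gs!2) * zc (gs!3)
           + xc (gs!0) * yc (gs!1) * zc (gs!2) * zc (gs!3)"

lemma phi0_cob5: "cobdry 4 phi0 [g1,g2,g3,g4,g5] = 0"
  unfolding cobdry_def sum14 merge_at_def phi0_def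
  apply (simp add: numeral_eq_Suc xc_mul yc_mul zc_mul)
  by algebra

lemma phi0_cocycle: "cocycle 4 phi0"
  unfolding cocycle_def
proof (intro allI impI)
  fix gs :: "grp list" assume "length gs = Suc 4"
  then have "length gs = 5" by simp
  then obtain g1 g2 g3 g4 g5 where gs: "gs = [g1,g2,g3,g4,g5]" using len5 by blast
  show "cobdry 4 phi0 gs = 0" unfolding gs by (rule phi0_cob5)
qed

lemma phi0_cohom: "cohom_mod2 3 phi0 sq1xyz"
  unfolding cohom_mod2_def
proof (intro exI[of _ "\<lambda>_. 0"] allI impI)
  fix gs :: "grp list"
  have "phi0 gs - sq1xyz gs = 2 * (- xc (gs!0) * yc (gs!1) * yc (gs!2) * zc (gs!3))"
    unfolding phi0_def sq1xyz_def by (simp add: algebra_simps)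
  moreover have "cobdry 3 (\<lambda>_. 0) gs = 0" unfolding cobdry_def by simp
  ultimately show "[phi0 gs - sq1xyz gs = cobdry 3 (\<lambda>_. 0) gs] (mod 2)"
    by (simp add: cong_iff_dvd_diff)
qed

lemma theta_sq1: "\<exists>q. theta (a,b,c) 3 sq1xyz [u1,u2,u3] - target a b c [u1,u2,u3] = 2 * q"
proof
  show "theta (a,b,c) 3 sq1xyz [u1,u2,u3] - target a b c [u1,u2,u3] =
    2 * (-(of_bool a * yc u1 * yc u2 * zc u3 + of_bool a * yc u1 * zc u2 * zc u3
          + of_bool b * xc u1 * xc u2 * zc u3))"
    unfolding theta3 sq1xyz_def target_def by (simp add: xyz_triple algebra_simps)
qed

lemma part2:
  assumes "cohom_mod2 3 \<phi> sq1xyz"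
  shows "cohom_mod2 2 (theta (a, b, c) 3 \<phi>) (target a b c)"
proof -
  obtain \<chi> where H: "\<And>gs. length gs = Suc 3 \<Longrightarrow> [\<phi> gs - sq1xyz gs = cobdry 3 \<chi> gs] (mod 2)"
    using assms unfolding cohom_mod2_def by blast
  have K: "\<exists>k. \<phi> gs - sq1xyz gs - cobdry 3 \<chi> gs = 2 * k" if "length gs = 4" for gs
    using H[of gs] that by (simp add: cong_iff_dvd_diff dvd_def)
  show ?thesis unfolding cohom_mod2_def
  proof (intro exI[of _ "theta (a,b,c) 2 \<chi>"] allI impI)
    fix us :: "grp list" assume "length us = Suc 2"
    then have "length us = 3" by simp
    then obtain u1 u2 u3 where us: "us = [u1,u2,u3]" using len3 by blast
    define g where "g = (a,b,c)"
    obtain k1 where k1: "\<phi> [g,u1,u2,u3] - sq1xyz [g,u1,u2,u3] - cobdry 3 \<chi> [g,u1,u2,u3] = 2 * k1"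
      using K[of "[g,u1,u2,u3]"] by auto
    obtain k2 where k2: "\<phi> [u1,g,u2,u3] - sq1xyz [u1,g,u2,u3] - cobdry 3 \<chi> [u1,g,u2,u3] = 2 * k2"
      using K[of "[u1,g,u2,u3]"] by auto
    obtain k3 where k3: "\<phi> [u1,u2,g,u3] - sq1xyz [u1,u2,g,u3] - cobdry 3 \<chi> [u1,u2,g,u3] = 2 * k3"
      using K[of "[u1,u2,g,u3]"] by auto
    obtain k4 where k4: "\<phi> [u1,u2,u3,g] - sq1xyz [u1,u2,u3,g] - cobdry 3 \<chi> [u1,u2,u3,g] = 2 * k4"
      using K[of "[u1,u2,u3,g]"] by auto
    obtain q where q: "theta g 3 sq1xyz [u1,u2,u3] - target a b c [u1,u2,u3] = 2 * q"
      using theta_sq1[of a b c u1 u2 u3] unfolding g_def by blast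
    have E: "theta g 3 \<phi> [u1,u2,u3] - target a b c [u1,u2,u3] - theta g 3 (cobdry 3 \<chi>) [u1,u2,u3]
          = 2 * (- k1 + k2 - k3 + k4 + q)"
      using k1 k2 k3 k4 q unfolding theta3 by (smt (verit))
    have "(2::int) dvd (theta g 3 \<phi> us - target a b c us - cobdry 2 (theta g 2 \<chi>) us)"
      unfolding us chain[symmetric] E by simp
    then show "[theta (a,b,c) 3 \<phi> us - target a b c us = cobdry 2 (theta (a,b,c) 2 \<chi>) us] (mod 2)"
      unfolding g_def cong_iff_dvd_diff .
  qed
qed

definition Ssum :: "cochain \<Rightarrow> grp \<Rightarrow> grp \<Rightarrow> int" where
  "Ssum f h1 h2 = f [h1,h1,h2] + f [h1,h2,h1] + f [h2,h1,h1] + f [gone,gone,h2] + f [h2,gone,gone]"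

lemma cycle: "Ssum (cobdry 2 \<psi>) h1 h2 = 2 * (\<psi> [h1, gmul h1 h2] - \<psi> [gmul h1 h2, h1])"
  unfolding Ssum_def cobdry_def sum12 merge_at_def
  by (simp add: gmul_self gmul_gone1 gmul_gone2 gmul_comm[of h2 h1])

lemma odd_pair: "(a,b,c) \<noteq> gone \<Longrightarrow> \<exists>h1 h2. odd (Ssum (target a b c) h1 h2)"
  apply (rule exI[of _ "if a \<or> b then (False,False,True) else (False,True,False)"])
  apply (rule exI[of _ "if a then (False,True,False) else (True,False,False)"])
  by (cases a; cases b; cases c) (simp_all add: Ssum_def target_def xyz_triple gone_def)

lemma Ssum_diff: "Ssum (\<lambda>t. f t - h t) h1 h2 = Ssum f h1 h2 - Ssum h h1 h2"
  unfolding Ssum_def by simp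

theorem lemma5p2:
  fixes a b c :: bool
  shows "(\<exists>\<phi>. cocycle 4 \<phi> \<and> cohom_mod2 3 \<phi> sq1xyz) \<and>
         (\<forall>\<phi>. cocycle 4 \<phi> \<and> cohom_mod2 3 \<phi> sq1xyz \<longrightarrow>
               cohom_mod2 2 (theta (a, b, c) 3 \<phi>) (target a b c)) \<and>
         (\<forall>\<phi>. cocycle 4 \<phi> \<and> cohom_mod2 3 \<phi> sq1xyz \<longrightarrow> (a, b, c) \<noteq> gone \<longrightarrow>
               \<not> is_coboundary 2 (theta (a, b, c) 3 \<phi>))"
proof (intro conjI allI impI)
  show "\<exists>\<phi>. cocycle 4 \<phi> \<and> cohom_mod2 3 \<phi> sq1xyz"
    using phi0_cocycle phi0_cohom by blast
next
  fix \<phi> assume "cocycle 4 \<phi> \<and> cohom_mod2 3 \<phi> sq1xyz"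
  then show "cohom_mod2 2 (theta (a, b, c) 3 \<phi>) (target a b c)" using part2 by blast
next
  fix \<phi> assume A: "cocycle 4 \<phi> \<and> cohom_mod2 3 \<phi> sq1xyz" and ne: "(a, b, c) \<noteq> gone"
  show "\<not> is_coboundary 2 (theta (a, b, c) 3 \<phi>)"
  proof
    assume "is_coboundary 2 (theta (a, b, c) 3 \<phi>)"
    then obtain \<psi> where P: "\<And>gs. length gs = Suc 2 \<Longrightarrow> theta (a,b,c) 3 \<phi> gs = cobdry 2 \<psi> gs"
      unfolding is_coboundary_def by blast
    obtain \<chi> where C: "\<And>gs. length gs = Suc 2 \<Longrightarrow>
        [theta (a,b,c) 3 \<phi> gs - target a b c gs = cobdry 2 \<chi> gs] (mod 2)"
      using part2 A unfolding cohom_mod2_def by blast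
    obtain h1 h2 where od: "odd (Ssum (target a b c) h1 h2)" using odd_pair ne by blast
    define D where "D = (\<lambda>t. cobdry 2 \<psi> t - target a b c t - cobdry 2 \<chi> t)"
    have De: "even (D t)" if "length t = 3" for t
      using P[of t] C[of t] that unfolding D_def by (simp add: cong_iff_dvd_diff)
    have "even (Ssum D h1 h2)"
      unfolding Ssum_def using De by simp
    moreover have "Ssum D h1 h2 = Ssum (cobdry 2 \<psi>) h1 h2 - Ssum (target a b c) h1 h2
        - Ssum (cobdry 2 \<chi>) h1 h2"
      unfolding D_def Ssum_def by simp
    ultimately have "even (Ssum (target a b c) h1 h2)"
      unfolding cycle by presburger
    then show False using od by blast
  qed
qed

end
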